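(* Let $P \subseteq \mathbb{R}^d$ be a rational polytope (of any dimension). Then there exists an integer vector $w \in \mathbb{Z}^d$ such that the functions $s \mapsto L_{P + kw}(s)$, for integers $k \geq 0$, are pairwise distinct.
   Context: For a polytope $P \subseteq \mathbb{R}^d$ and real $s \ge 0$, the real Ehrhart function is $L_P(s) = \#(sP \cap \mathbb{Z}^d)$, where $sP = \{sx : x \in P\}$. A rational polytope is the convex hull of finitely many points of $\mathbb{Q}^d$. *)

theory Defs
  imports "HOL-Analysis.Analysis"
begin

definition integer_point :: "real^'n \<Rightarrow> bool" where
  "integer_point x \<longleftrightarrow> (\<forall>i. x $ i \<in> \<int>)"

definition rational_polytope :: "(real^'n) set \<Rightarrow> bool" where
  "rational_polytope P \<longleftrightarrow>
     (\<exists>V. finite V \<and> V \<noteq> {} \<and> (\<forall>v\<in>V. \<forall>i. v $ i \<in> \<rat>) \<and> P = convex hull V)"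

definition ehrhart :: "(real^'n) set \<Rightarrow> real \<Rightarrow> nat" where
  "ehrhart P s = card {x. integer_point x \<and> x \<in> (\<lambda>y. s *\<^sub>R y) ` P}"

end

theory Submission
  imports Defs
begin
lemma int_abs_lt1: "(x::real) \<in> \<int> \<Longrightarrow> \<bar>x\<bar> < 1 \<Longrightarrow> x = 0"
  using Ints_eq_abs_less1[of x 0] by simp

lemma int_eq_close: "(x::real) \<in> \<int> \<Longrightarrow> y \<in> \<int> \<Longrightarrow> \<bar>x - y\<bar> < 1 \<Longrightarrow> x = y"
  using Ints_eq_abs_less1 by blast

lemma int_not_01: "(x::real) \<in> \<int> \<Longrightarrow> 0 < x \<Longrightarrow> x < 1 \<Longrightarrow> False"
  by (auto elim!: Ints_cases)

lemma int_nonneg_nat: "(x::real) \<in> \<int> \<Longrightarrow> 0 \<le> x \<Longrightarrow> \<exists>n::nat. x = real n"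
proof -
  assume "x \<in> \<int>" "0 \<le> x"
  then obtain z where "x = of_int z" "0 \<le> z" by (auto elim!: Ints_cases)
  then show ?thesis by (intro exI[of _ "nat z"]) simp
qed

lemma common_denom:
  fixes v :: "real^'n"
  assumes "\<forall>i. v$i \<in> \<rat>"
  shows "\<exists>D::nat. D > 0 \<and> (\<forall>i. real D * v$i \<in> \<int>)"
proof -
  have "\<forall>i. \<exists>d::nat. d > 0 \<and> real d * v$i \<in> \<int>"
  proof
    fix i
    from assms have "v$i \<in> \<rat>" by simp
    then obtain a b where ab: "b > 0" "v$i = of_int a / of_int b" by (rule Rats_cases')
    have "real (nat b) * v$i = of_int a" using ab by simp
    then show "\<exists>d::nat. d > 0 \<and> real d * v$i \<in> \<int>" using ab(1)
      by (intro exI[of _ "nat b"]) auto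
  qed
  then obtain d where d: "\<forall>i. d i > 0 \<and> real (d i) * v$i \<in> \<int>" by metis
  define D where "D = (\<Prod>i\<in>UNIV. d i)"
  have "D > 0" unfolding D_def using d by (simp add: prod_pos)
  moreover have "real D * v$i \<in> \<int>" for i
  proof -
    have "D = d i * (\<Prod>j\<in>UNIV-{i}. d j)" unfolding D_def
      by (simp add: prod.remove)
    then have "real D * v$i = real (\<Prod>j\<in>UNIV-{i}. d j) * (real (d i) * v$i)"
      by simp
    then show ?thesis using d by (metis Ints_mult Ints_of_nat)
  qed
  ultimately show ?thesis by blast
qed

lemma primitive_exists:
  fixes v :: "real^'n"
  assumes "\<forall>i. v$i \<in> \<rat>"
  shows "\<exists>u r. integer_point u \<and> u \<noteq> 0 \<and> r \<ge> 0 \<and> v = r *\<^sub>R u \<and>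
           (\<forall>c. 0 < c \<and> c < 1 \<longrightarrow> \<not> integer_point (c *\<^sub>R u))"
proof -
  define Q where "Q n \<longleftrightarrow> (\<exists>u r. integer_point u \<and> u \<noteq> 0 \<and> r \<ge> 0 \<and> v = r *\<^sub>R u
      \<and> (\<Sum>i\<in>UNIV. \<bar>u$i\<bar>) = real n)" for n :: nat
  have ex: "\<exists>u r. integer_point u \<and> u \<noteq> 0 \<and> r \<ge> 0 \<and> v = r *\<^sub>R u"
  proof (cases "v = 0")
    case True then show ?thesis
      by (intro exI[of _ "vec 1"] exI[of _ 0]) (auto simp: integer_point_def vec_eq_iff)
  next
    case False
    obtain D::nat where D: "D>0" "\<forall>i. real D * v$i \<in> \<int>" using common_denom[OF assms] by blast
    show ?thesis using D False
      by (intro exI[of _ "real D *\<^sub>R v"] exI[of _ "1/real D"]) (auto simp: integer_point_def)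
  qed
  have sumint: "(\<Sum>i\<in>UNIV. \<bar>u$i\<bar>) \<in> \<int>" if "integer_point u" for u :: "real^'n"
    using that unfolding integer_point_def by (intro Ints_sum Ints_abs) auto
  have "\<exists>n. Q n"
  proof -
    obtain u r where u: "integer_point u" "u \<noteq> 0" "r \<ge> 0" "v = r *\<^sub>R u" using ex by blast
    obtain n where "(\<Sum>i\<in>UNIV. \<bar>u$i\<bar>) = real n"
      using int_nonneg_nat[OF sumint[OF u(1)]] by (auto intro: sum_nonneg)
    then show ?thesis unfolding Q_def using u by blast
  qed
  then obtain n where Qn: "Q n" and min: "\<forall>m<n. \<not> Q m"
    using exists_least_iff[of Q] by blast
  then obtain u r where u: "integer_point u" "u \<noteq> 0" "r \<ge> 0" "v = r *\<^sub>R u"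
    and un: "(\<Sum>i\<in>UNIV. \<bar>u$i\<bar>) = real n" unfolding Q_def by blast
  have prim: "\<not> integer_point (c *\<^sub>R u)" if c: "0 < c" "c < 1" for c
  proof
    assume int: "integer_point (c *\<^sub>R u)"
    have nz: "c *\<^sub>R u \<noteq> 0" using u c by simp
    have vv: "v = (r/c) *\<^sub>R (c *\<^sub>R u)" using c u by simp
    have rc: "r / c \<ge> 0" using u c by simp
    have cs: "(\<Sum>i\<in>UNIV. \<bar>(c *\<^sub>R u)$i\<bar>) = c * real n"
      using c un by (simp add: abs_mult sum_distrib_left[symmetric])
    obtain m where m: "c * real n = real m"
      using int_nonneg_nat[OF sumint[OF int]] cs c by auto
    have "n > 0"
    proof (rule ccontr)
      assume "\<not> n > 0"
      then have "(\<Sum>i\<in>UNIV. \<bar>u$i\<bar>) = 0" using un by simp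
      then have "\<forall>i. u$i = 0" by (simp add: sum_nonneg_eq_0_iff)
      then show False using u(2) by (simp add: vec_eq_iff)
    qed
    then have "c * real n < 1 * real n" using c by (intro mult_strict_right_mono) auto
    then have "real m < real n" using m by simp
    then have "m < n" by simp
    moreover have "Q m" unfolding Q_def using int nz vv rc cs m by metis
    ultimately show False using min by blast
  qed
  show ?thesis using u prim by blast
qed

lemma arith_core:
  fixes n pj uj r B N M k1 k2 :: real
  assumes n: "n \<in> \<int>" and uj: "uj \<in> \<int>" and k1i: "k1 \<in> \<int>" and k2i: "k2 \<in> \<int>"
    and pj: "\<bar>pj\<bar> \<le> B" and ujN: "\<bar>uj\<bar> \<le> N" and B0: "0 \<le> B" and r0: "0 \<le> r"
    and M: "2*B + (1+N)*r + 1 < M" and k1: "1 \<le> k1" and k12: "k1 + 1 \<le> k2"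
    and eq: "n * (r + k2*M) = pj + k1*M*uj" and ni: "k1/k2*uj \<notin> \<int>"
  shows False
proof -
  have N0: "0 \<le> N" using ujN by linarith
  have Mpos: "M > 0" using B0 r0 N0 M by (smt (verit) mult_nonneg_nonneg)
  have MB: "M > B" using B0 r0 N0 M by (smt (verit) mult_nonneg_nonneg)
  define d where "d = n*k2 - k1*uj"
  have dI: "d \<in> \<int>" unfolding d_def using n uj k1i k2i by auto
  have "d \<noteq> 0"
  proof
    assume "d = 0"
    then have "k1/k2*uj = n" unfolding d_def using k1 k12 by (simp add: field_simps)
    then show False using ni n by simp
  qed
  then have d1: "\<bar>d\<bar> \<ge> 1" using dI Ints_nonzero_abs_ge1 by blast
  have pd: "pj - n*r = M*d" unfolding d_def using eq by (simp add: algebra_simps)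
  have big: "\<bar>pj - n*r\<bar> \<ge> M" unfolding pd abs_mult using d1 Mpos
    by (simp add: mult_le_cancel_left1)
  have nb: "\<bar>n\<bar> \<le> 1 + N"
  proof (rule ccontr)
    assume "\<not> \<bar>n\<bar> \<le> 1 + N"
    then have nN: "\<bar>n\<bar> > 1 + N" by simp
    have "\<bar>n\<bar> * (r + k2*M) \<ge> \<bar>n\<bar> * (k2*M)"
      using r0 by (intro mult_left_mono) auto
    moreover have "\<bar>n\<bar> * (k2*M) > (1+N) * (k2*M)"
      using nN k1 k12 Mpos by (intro mult_strict_right_mono) auto
    moreover have "(1+N)*(k2*M) = k2*M + N*k2*M" by (simp add: algebra_simps)
    moreover have "k2*M \<ge> M" using k1 k12 Mpos by simp
    moreover have "N*k2*M \<ge> N*k1*M" using N0 Mpos k12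
      by (intro mult_right_mono mult_left_mono) auto
    moreover have "\<bar>pj + k1*M*uj\<bar> \<le> B + k1*M*N"
    proof -
      have "\<bar>k1*M*uj\<bar> = k1*M*\<bar>uj\<bar>" using k1 Mpos by (simp add: abs_mult)
      also have "\<dots> \<le> k1*M*N" using k1 Mpos ujN by (intro mult_left_mono) auto
      finally have "\<bar>k1*M*uj\<bar> \<le> k1*M*N" .
      then show ?thesis using pj by linarith
    qed
    moreover have "\<bar>n\<bar> * (r + k2*M) = \<bar>pj + k1*M*uj\<bar>"
    proof -
      have "k2*M \<ge> 0" using Mpos k1 k12 by simp
      then have "r + k2*M \<ge> 0" using r0 by linarith
      then have "\<bar>n\<bar> * (r + k2*M) = \<bar>n * (r + k2*M)\<bar>" by (simp add: abs_mult)
      then show ?thesis using eq by simp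
    qed
    moreover have "N*k1*M = k1*M*N" by simp
    ultimately show False using MB by linarith
  qed
  have "\<bar>n*r\<bar> \<le> (1+N)*r" unfolding abs_mult using nb r0 by (simp add: mult_right_mono)
  then have "\<bar>pj - n*r\<bar> \<le> B + (1+N)*r" using pj by linarith
  then show False using big M B0 by linarith
qed

lemma pair_lemma:
  fixes P :: "(real^'n) set" and u v :: "real^'n" and M k1 k2 :: nat
  assumes vP: "v \<in> P" and Bc: "\<And>x i. x \<in> P \<Longrightarrow> \<bar>x$i\<bar> \<le> B" and B0: "0 \<le> B"
    and ui: "integer_point u" and u0: "u \<noteq> 0" and r0: "r \<ge> 0" and vr: "v = r *\<^sub>R u"
    and prim: "\<And>c. 0 < c \<Longrightarrow> c < 1 \<Longrightarrow> \<not> integer_point (c *\<^sub>R u)"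
    and M: "2*B + (1 + norm u)*r + 1 < real M"
    and k: "k1 < k2"
  shows "\<exists>s\<ge>0. ehrhart ((\<lambda>x. x + real k1 *\<^sub>R (real M *\<^sub>R u)) ` P) s
              \<noteq> ehrhart ((\<lambda>x. x + real k2 *\<^sub>R (real M *\<^sub>R u)) ` P) s"
proof -
  define T where "T k s = {x. integer_point x \<and> (\<exists>p\<in>P. x = s *\<^sub>R (p + (real k * real M) *\<^sub>R u))}"
    for k :: nat and s :: real
  have eh: "ehrhart ((\<lambda>x. x + real k *\<^sub>R (real M *\<^sub>R u)) ` P) s = card (T k s)" for k s
    unfolding ehrhart_def T_def by (rule arg_cong[where f=card]) (auto simp: image_iff)
  have N0: "0 \<le> norm u" by simp
  have Mpos: "real M > 0" and MB: "real M > 2*B" using M B0 r0 N0 by (smt (verit) mult_nonneg_nonneg)+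
  have uc: "\<bar>u$i\<bar> \<le> norm u" for i by (rule component_le_norm_cart)
  have uI: "u$i \<in> \<int>" for i using ui integer_point_def by auto
  have k2: "real k2 \<ge> 1" using k by simp
  have zI: "z$i \<in> \<int>" if "integer_point z" for z :: "real^'n" and i
    using that integer_point_def by auto
  show ?thesis
  proof (cases "k1 = 0 \<and> 0 \<in> P")
    case False
    define s where "s = 1 / (r + real k2 * real M)"
    have "real k2 * real M \<ge> 1 * real M" using k2 Mpos by (intro mult_right_mono) auto
    then have den: "r + real k2 * real M \<ge> real M" using r0 by linarith
    have s0: "s > 0" unfolding s_def using den Mpos by simp
    have s1: "s * (r + real k2 * real M) = 1" unfolding s_def using den Mpos by simp
    have "s * (2*B) < s * (r + real k2 * real M)" using s0 den MB by (intro mult_strict_left_mono) auto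
    then have sB: "s * (2*B) < 1" using s1 by simp
    have T2: "T k2 s = {u}"
    proof (intro equalityI subsetI)
      fix z assume "z \<in> T k2 s"
      then obtain p where zi: "integer_point z" and p: "p \<in> P"
        and z: "z = s *\<^sub>R (p + (real k2 * real M) *\<^sub>R u)" unfolding T_def by blast
      have "z$i = u$i" for i
      proof (rule int_eq_close)
        show "z$i \<in> \<int>" using zi by (rule zI)
        show "u$i \<in> \<int>" by (rule uI)
        have "s * (v$i + real k2 * real M * u$i) = (s * (r + real k2 * real M)) * u$i"
          by (simp add: vr algebra_simps)
        then have "u$i = s * (v$i + real k2 * real M * u$i)" using s1 by simp
        then have "z$i - u$i = s * (p$i - v$i)" using z by (simp add: algebra_simps)
        moreover have "\<bar>p$i - v$i\<bar> \<le> 2*B" using Bc[OF p, of i] Bc[OF vP, of i] by linarith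
        ultimately have "\<bar>z$i - u$i\<bar> \<le> s * (2*B)" using s0 by (simp add: abs_mult mult_left_mono)
        then show "\<bar>z$i - u$i\<bar> < 1" using sB by linarith
      qed
      then show "z \<in> {u}" by (simp add: vec_eq_iff)
    next
      fix z assume "z \<in> {u}"
      moreover have "v + (real k2 * real M) *\<^sub>R u = (r + real k2 * real M) *\<^sub>R u"
        by (simp add: vr scaleR_add_left)
      then have "u = s *\<^sub>R (v + (real k2 * real M) *\<^sub>R u)" using s1 by simp
      ultimately show "z \<in> T k2 s" unfolding T_def using ui vP by blast
    qed
    have T1: "T k1 s = {}"
    proof (rule ccontr)
      assume "T k1 s \<noteq> {}"
      then obtain z p where zi: "integer_point z" and p: "p \<in> P"
        and z: "z = s *\<^sub>R (p + (real k1 * real M) *\<^sub>R u)" unfolding T_def by blast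
      show False
      proof (cases "k1 = 0")
        case True
        then have nP: "0 \<notin> P" using False by blast
        have "z$i = 0" for i
        proof (rule int_abs_lt1)
          show "z$i \<in> \<int>" using zi by (rule zI)
          have "\<bar>z$i\<bar> = s * \<bar>p$i\<bar>" using z True s0 by (simp add: abs_mult)
          also have "\<dots> \<le> s * B" using Bc[OF p, of i] s0 by (intro mult_left_mono) auto
          finally show "\<bar>z$i\<bar> < 1" using sB s0 B0 by (smt (verit) mult_left_mono)
        qed
        then have "z = 0" by (simp add: vec_eq_iff)
        then have "p = 0" using z True s0 by simp
        then show False using p nP by simp
      next
        case False
        then have k1: "real k1 \<ge> 1" by simp
        define c where "c = real k1 / real k2"
        have c0: "0 < c" using False k by (simp add: c_def)
        have c1: "c < 1" using k by (simp add: c_def)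
        have "\<not> integer_point (c *\<^sub>R u)" using c0 c1 by (rule prim)
        then obtain j where nj: "c * u$j \<notin> \<int>" unfolding integer_point_def by auto
        have n: "z$j \<in> \<int>" using zi by (rule zI)
        have zj: "z$j = s * (p$j + real k1 * real M * u$j)" using z by (simp add: algebra_simps)
        then have "z$j * (r + real k2 * real M) = (s * (r + real k2 * real M)) * (p$j + real k1 * real M * u$j)"
          by (simp add: algebra_simps)
        then have eq: "z$j * (r + real k2 * real M) = p$j + real k1 * real M * u$j"
          using s1 by simp
        have kk: "real k1 + 1 \<le> real k2" using k by linarith
        show False
          using arith_core[OF n uI[of j] _ _ Bc[OF p, of j] uc[of j] B0 r0 M k1 kk eq] nj
          unfolding c_def by auto
      qed
    qed
    show ?thesis using T1 T2 eh s0 by (intro exI[of _ s]) auto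
  next
    case True
    then have k10: "k1 = 0" and P0: "0 \<in> P" by auto
    obtain j where uj0: "u$j \<noteq> 0" using u0 by (auto simp: vec_eq_iff)
    have uj1: "\<bar>u$j\<bar> \<ge> 1" using uI[of j] uj0 Ints_nonzero_abs_ge1 by blast
    define D where "D = 2 * real k2 * real M * \<bar>u$j\<bar>"
    define s where "s = 1 / D"
    have "real k2 * \<bar>u$j\<bar> \<ge> 1 * 1" using k2 uj1 by (intro mult_mono) auto
    then have "real M * (real k2 * \<bar>u$j\<bar>) \<ge> real M * 1" using Mpos by (intro mult_left_mono) auto
    then have den: "D \<ge> 2 * real M" unfolding D_def by (simp add: algebra_simps)
    have s0: "s > 0" unfolding s_def using den Mpos by simp
    have s1: "s * D = 1" unfolding s_def using den Mpos by simp
    have "s * (2 * B) < s * D" using s0 den MB by (intro mult_strict_left_mono) auto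
    then have sB: "s * B < 1/2" using s1 by simp
    have spb: "\<bar>s * p$i\<bar> < 1/2" if "p \<in> P" for p i
    proof -
      have "\<bar>s * p$i\<bar> = s * \<bar>p$i\<bar>" using s0 by (simp add: abs_mult)
      also have "\<dots> \<le> s * B" using Bc[OF that, of i] s0 by (intro mult_left_mono) auto
      finally show ?thesis using sB by linarith
    qed
    have T0: "T 0 s = {0}"
    proof (intro equalityI subsetI)
      fix z assume "z \<in> T 0 s"
      then obtain p where zi: "integer_point z" and p: "p \<in> P"
        and z: "z = s *\<^sub>R p" unfolding T_def by auto
      have "z$i = 0" for i
      proof (rule int_abs_lt1)
        show "z$i \<in> \<int>" using zi by (rule zI)
        show "\<bar>z$i\<bar> < 1" using spb[OF p, of i] z by simp
      qed
      then show "z \<in> {0}" by (simp add: vec_eq_iff)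
    next
      fix z assume "z \<in> {0::real^'n}"
      then show "z \<in> T 0 s" unfolding T_def using P0 by (auto simp: integer_point_def intro!: bexI[of _ 0])
    qed
    have T2: "T k2 s = {}"
    proof (rule ccontr)
      assume "T k2 s \<noteq> {}"
      then obtain z p where zi: "integer_point z" and p: "p \<in> P"
        and z: "z = s *\<^sub>R (p + (real k2 * real M) *\<^sub>R u)" unfolding T_def by blast
      have n: "z$j \<in> \<int>" using zi by (rule zI)
      have hh: "s * (real k2 * real M * u$j) = u$j / (2 * \<bar>u$j\<bar>)"
        unfolding s_def D_def using Mpos k2 uj0 by (simp add: field_simps)
      have zj: "z$j = s * p$j + u$j / (2 * \<bar>u$j\<bar>)" using z hh by (simp add: algebra_simps)
      show False
      proof (cases "u$j > 0")
        case True
        then have "z$j = s * p$j + 1/2" using zj by simp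
        then show False using int_not_01[OF n] spb[OF p, of j] by linarith
      next
        case False
        then have "u$j < 0" using uj0 by simp
        then have "z$j = s * p$j - 1/2" using zj by simp
        moreover have "- z$j \<in> \<int>" using n by simp
        ultimately show False using int_not_01[of "- z$j"] spb[OF p, of j] by linarith
      qed
    qed
    show ?thesis
    proof (intro exI[of _ s] conjI)
      show "0 \<le> s" using s0 by simp
      show "ehrhart ((\<lambda>x. x + real k1 *\<^sub>R (real M *\<^sub>R u)) ` P) s
              \<noteq> ehrhart ((\<lambda>x. x + real k2 *\<^sub>R (real M *\<^sub>R u)) ` P) s"
        unfolding eh using T0 T2 k10 by simp
    qed
  qed
qed

theorem theorem1:
  fixes P :: "(real^'n) set"
  assumes "rational_polytope P"
  shows "\<exists>w::real^'n. integer_point w \<and>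
           (\<forall>k1 k2::nat. k1 \<noteq> k2 \<longrightarrow>
              (\<exists>s\<ge>0. ehrhart ((\<lambda>x. x + real k1 *\<^sub>R w) ` P) s
                     \<noteq> ehrhart ((\<lambda>x. x + real k2 *\<^sub>R w) ` P) s))"
proof -
  from assms obtain V where V: "finite V" "V \<noteq> {}" "\<forall>v\<in>V. \<forall>i. v$i \<in> \<rat>"
    "P = convex hull V" unfolding rational_polytope_def by blast
  obtain v where vV: "v \<in> V" using V by blast
  have vP: "v \<in> P" unfolding V(4) by (rule hull_inc[OF vV])
  have "bounded P" unfolding V(4) by (rule bounded_convex_hull[OF finite_imp_bounded[OF V(1)]])
  then obtain B where B: "\<forall>x\<in>P. norm x \<le> B" by (auto simp: bounded_iff)
  have B0: "0 \<le> B" using bspec[OF B vP] norm_ge_zero[of v] by linarith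
  have Bc: "\<bar>x$i\<bar> \<le> B" if "x \<in> P" for x i
    using component_le_norm_cart[of x i] bspec[OF B that] by linarith
  obtain u r where u: "integer_point u" "u \<noteq> 0" "r \<ge> 0" "v = r *\<^sub>R u"
    and prim: "\<forall>c. 0 < c \<and> c < 1 \<longrightarrow> \<not> integer_point (c *\<^sub>R u)"
    using primitive_exists[of v] V(3) vV by blast
  obtain M :: nat where M: "2*B + (1 + norm u)*r + 1 < real M"
    using reals_Archimedean2 by blast
  have pl: "\<exists>s\<ge>0. ehrhart ((\<lambda>x. x + real k1 *\<^sub>R (real M *\<^sub>R u)) ` P) s
              \<noteq> ehrhart ((\<lambda>x. x + real k2 *\<^sub>R (real M *\<^sub>R u)) ` P) s" if "k1 < k2" for k1 k2
  proof (rule pair_lemma[OF vP Bc B0 u _ M that])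
    fix c :: real assume "0 < c" "c < 1"
    then show "\<not> integer_point (c *\<^sub>R u)" using prim by simp
  qed
  show ?thesis
  proof (intro exI[of _ "real M *\<^sub>R u"] conjI allI impI)
    show "integer_point (real M *\<^sub>R u)" using u(1) by (auto simp: integer_point_def)
  next
    fix k1 k2 :: nat assume "k1 \<noteq> k2"
    then consider "k1 < k2" | "k2 < k1" by linarith
    then show "\<exists>s\<ge>0. ehrhart ((\<lambda>x. x + real k1 *\<^sub>R (real M *\<^sub>R u)) ` P) s
              \<noteq> ehrhart ((\<lambda>x. x + real k2 *\<^sub>R (real M *\<^sub>R u)) ` P) s"
    proof cases
      case 1
      then show ?thesis by (rule pl)
    next
      case 2
      then obtain s where s: "s \<ge> 0" and ne: "ehrhart ((\<lambda>x. x + real k2 *\<^sub>R (real M *\<^sub>R u)) ` P) s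
              \<noteq> ehrhart ((\<lambda>x. x + real k1 *\<^sub>R (real M *\<^sub>R u)) ` P) s"
        using pl by blast
      show ?thesis using s not_sym[OF ne] by blast
    qed
  qed
qed

end
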